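(* (a) There are absolute constants $c_1,c_2>0$ such that for all integers $m,n\ge 2$, $$c_1(m+n)\le \mathrm{bdim}(P_m\times P_n)\le c_2(m+n).$$ (b) For each integer $d\ge2$ there are constants $c_1(d),c_2(d)>0$ such that for all integers $n_1,\dots,n_d\ge2$, $$c_1(d)\sum_{i=1}^d n_i\le \mathrm{bdim}\Big(\prod_{i=1}^d P_{n_i}\Big)\le c_2(d)\sum_{i=1}^d n_i.$$
   Context: $P_m\times P_n$ denotes the Cartesian product of paths (the grid graph), and $\prod_{i=1}^d P_{n_i}$ the $d$-dimensional grid (iterated Cartesian product). $d(x,y)$ denotes graph distance. For an integer $k\ge1$ let $d_k(x,y)=\min\{d(x,y),k+1\}$. A function $f:V(G)\to\mathbb{Z}_{\ge 0}$ is a resolving broadcast of $G$ if for all distinct $x,y\in V(G)$ there is $z\in V(G)$ with $f(z)=i>0$ and $d_i(x,z)\ne d_i(y,z)$. The broadcast dimension $\mathrm{bdim}(G)$ is the minimum of $\sum_{v\in V(G)}f(v)$ over all resolving broadcasts $f$ of $G$. *)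

theory Defs
  imports Complex_Main
begin

definition walk_of_len :: "'a set \<Rightarrow> ('a \<Rightarrow> 'a \<Rightarrow> bool) \<Rightarrow> 'a \<Rightarrow> 'a \<Rightarrow> nat \<Rightarrow> bool" where
  "walk_of_len V E x y k \<longleftrightarrow> (\<exists>p :: nat \<Rightarrow> 'a. p 0 = x \<and> p k = y \<and>
      (\<forall>i\<le>k. p i \<in> V) \<and> (\<forall>i<k. E (p i) (p (Suc i))))"

text \<open>Graph distance: length of a shortest walk (graphs considered here are connected).\<close>
definition gdist :: "'a set \<Rightarrow> ('a \<Rightarrow> 'a \<Rightarrow> bool) \<Rightarrow> 'a \<Rightarrow> 'a \<Rightarrow> nat" where
  "gdist V E x y = (LEAST k. walk_of_len V E x y k)"

definition tdist :: "'a set \<Rightarrow> ('a \<Rightarrow> 'a \<Rightarrow> bool) \<Rightarrow> nat \<Rightarrow> 'a \<Rightarrow> 'a \<Rightarrow> nat" where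
  "tdist V E k x y = min (gdist V E x y) (k + 1)"

definition resolving_broadcast :: "'a set \<Rightarrow> ('a \<Rightarrow> 'a \<Rightarrow> bool) \<Rightarrow> ('a \<Rightarrow> nat) \<Rightarrow> bool" where
  "resolving_broadcast V E f \<longleftrightarrow> (\<forall>v. v \<notin> V \<longrightarrow> f v = 0) \<and>
     (\<forall>x\<in>V. \<forall>y\<in>V. x \<noteq> y \<longrightarrow>
        (\<exists>z\<in>V. f z > 0 \<and> tdist V E (f z) x z \<noteq> tdist V E (f z) y z))"

definition bdim :: "'a set \<Rightarrow> ('a \<Rightarrow> 'a \<Rightarrow> bool) \<Rightarrow> nat" where
  "bdim V E = (LEAST s. \<exists>f. resolving_broadcast V E f \<and> (\<Sum>v\<in>V. f v) = s)"

definition path_V :: "nat \<Rightarrow> nat set" where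
  "path_V n = {0..<n}"

definition path_E :: "nat \<Rightarrow> nat \<Rightarrow> bool" where
  "path_E a b \<longleftrightarrow> a + 1 = b \<or> b + 1 = a"

definition cart_V :: "'a set \<Rightarrow> 'b set \<Rightarrow> ('a \<times> 'b) set" where
  "cart_V V1 V2 = V1 \<times> V2"

definition cart_E :: "('a \<Rightarrow> 'a \<Rightarrow> bool) \<Rightarrow> ('b \<Rightarrow> 'b \<Rightarrow> bool) \<Rightarrow> ('a \<times> 'b) \<Rightarrow> ('a \<times> 'b) \<Rightarrow> bool" where
  "cart_E E1 E2 u v \<longleftrightarrow> (E1 (fst u) (fst v) \<and> snd u = snd v) \<or> (fst u = fst v \<and> E2 (snd u) (snd v))"

text \<open>d-dimensional grid \<Prod>_{i<d} P_{ns!i} (iterated Cartesian product of paths);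
  vertices are lists of length d = length ns, two vertices adjacent iff they differ in exactly
  one coordinate, where they are adjacent in the corresponding path.\<close>
definition grid_V :: "nat list \<Rightarrow> nat list set" where
  "grid_V ns = {x. length x = length ns \<and> (\<forall>i<length ns. x ! i \<in> path_V (ns ! i))}"

definition grid_E :: "nat list \<Rightarrow> nat list \<Rightarrow> bool" where
  "grid_E x y \<longleftrightarrow> length x = length y \<and>
     (\<exists>i<length x. path_E (x ! i) (y ! i) \<and> (\<forall>j<length x. j \<noteq> i \<longrightarrow> x ! j = y ! j))"

end

theory Submission imports Defs begin

lemma gdist_eq:
  fixes D :: "'a \<Rightarrow> nat"
  assumes xV: "x \<in> V" and yV: "y \<in> V"
    and zero: "\<And>u. u \<in> V \<Longrightarrow> D u = 0 \<Longrightarrow> u = y"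
    and Dy: "D y = 0"
    and step: "\<And>u. u \<in> V \<Longrightarrow> D u > 0 \<Longrightarrow> \<exists>v\<in>V. E u v \<and> D v + 1 = D u"
    and lip: "\<And>u v. u \<in> V \<Longrightarrow> v \<in> V \<Longrightarrow> E u v \<Longrightarrow> D u \<le> D v + 1"
  shows "gdist V E x y = D x"
proof -
  have ex: "walk_of_len V E u y n" if "u \<in> V" "D u = n" for u n
    using that
  proof (induction n arbitrary: u)
    case 0
    then have "u = y" using zero by auto
    then show ?case unfolding walk_of_len_def using yV by (intro exI[of _ "\<lambda>_. y"]) auto
  next
    case (Suc n)
    then obtain v where v: "v \<in> V" "E u v" "D v + 1 = D u" using step by fastforce
    then have "walk_of_len V E v y n" using Suc by auto
    then obtain p where p: "p 0 = v" "p n = y" "\<forall>i\<le>n. p i \<in> V" "\<forall>i<n. E (p i) (p (Suc i))"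
      unfolding walk_of_len_def by blast
    show ?case unfolding walk_of_len_def
    proof (intro exI[of _ "case_nat u p"] conjI allI impI)
      fix i assume "i \<le> Suc n" then show "case_nat u p i \<in> V"
        using p Suc.prems by (cases i) auto
    next
      fix i assume "i < Suc n" then show "E (case_nat u p i) (case_nat u p (Suc i))"
        using p v by (cases i) auto
    qed (use p in auto)
  qed
  have lb: "D u \<le> k" if "walk_of_len V E u y k" for u k
    using that
  proof (induction k arbitrary: u)
    case 0
    then show ?case using Dy unfolding walk_of_len_def by auto
  next
    case (Suc k)
    then obtain p where p: "p 0 = u" "p (Suc k) = y" "\<forall>i\<le>Suc k. p i \<in> V" "\<forall>i<Suc k. E (p i) (p (Suc i))"
      unfolding walk_of_len_def by blast
    have "walk_of_len V E (p 1) y k" unfolding walk_of_len_def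
      by (intro exI[of _ "\<lambda>i. p (Suc i)"]) (use p in auto)
    then have "D (p 1) \<le> k" using Suc.IH by auto
    moreover have "D u \<le> D (p 1) + 1" using lip[of u "p 1"] p by auto
    ultimately show ?case by simp
  qed
  show ?thesis unfolding gdist_def
    by (rule Least_equality) (use ex xV lb in auto)
qed

definition ad :: "nat \<Rightarrow> nat \<Rightarrow> nat" where "ad a b = (a - b) + (b - a)"
definition Dl :: "nat \<Rightarrow> nat list \<Rightarrow> nat list \<Rightarrow> nat" where
  "Dl d x y = (\<Sum>i<d. ad (x!i) (y!i))"

lemma grid_lip:
  assumes "u \<in> grid_V ns" "v \<in> grid_V ns" "grid_E u v"
  shows "Dl (length ns) u y \<le> Dl (length ns) v y + 1"
proof -
  let ?d = "length ns"
  have lu: "length u = ?d" "length v = ?d" using assms unfolding grid_V_def by auto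
  obtain i where i: "i < ?d" "path_E (u!i) (v!i)" "\<forall>j<?d. j \<noteq> i \<longrightarrow> u!j = v!j"
    using assms(3) lu unfolding grid_E_def by auto
  have "Dl ?d u y \<le> (\<Sum>j<?d. ad (v!j) (y!j) + (if j = i then 1 else 0))"
    unfolding Dl_def
  proof (rule sum_mono)
    fix j assume "j \<in> {..<?d}"
    then show "ad (u!j) (y!j) \<le> ad (v!j) (y!j) + (if j = i then 1 else 0)"
      using i unfolding ad_def path_E_def by (cases "j = i") auto
  qed
  also have "\<dots> = Dl ?d v y + 1" unfolding Dl_def sum.distrib using i by simp
  finally show ?thesis .
qed

lemma grid_step:
  assumes "u \<in> grid_V ns" "y \<in> grid_V ns" "Dl (length ns) u y > 0"
  shows "\<exists>v\<in>grid_V ns. grid_E u v \<and> Dl (length ns) v y + 1 = Dl (length ns) u y"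
proof -
  let ?d = "length ns"
  have lu: "length u = ?d" "length y = ?d" and bu: "\<forall>i<?d. u!i < ns!i \<and> y!i < ns!i"
    using assms unfolding grid_V_def path_V_def by auto
  obtain i where i: "i < ?d" "ad (u!i) (y!i) > 0"
    using assms(3) unfolding Dl_def by (metis (no_types, lifting) lessThan_iff not_gr0 sum.neutral)
  define w where "w = (if u!i < y!i then Suc (u!i) else u!i - 1)"
  define v where "v = u[i := w]"
  have v1: "v!i = w" using i lu unfolding v_def by simp
  have v2: "j \<noteq> i \<Longrightarrow> v!j = u!j" for j unfolding v_def by simp
  have lv: "length v = ?d" unfolding v_def using lu by simp
  have "v \<in> grid_V ns" unfolding grid_V_def path_V_def
  proof (intro CollectI conjI allI impI lv)
    fix j assume j: "j < ?d"
    show "v!j \<in> {0..<ns!j}"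
    proof (cases "j = i")
      case True then show ?thesis using v1 bu i j unfolding w_def by auto
    next
      case False then show ?thesis using v2 bu j by auto
    qed
  qed
  moreover have "grid_E u v" unfolding grid_E_def
    using lu lv i v1 v2 unfolding w_def path_E_def ad_def by (auto intro!: exI[of _ i])
  moreover have "Dl ?d v y + 1 = Dl ?d u y"
  proof -
    have "Dl ?d v y + 1 = (\<Sum>j<?d. ad (v!j) (y!j) + (if j = i then 1 else 0))"
      unfolding Dl_def sum.distrib using i by simp
    also have "\<dots> = Dl ?d u y" unfolding Dl_def
    proof (rule sum.cong)
      fix j assume "j \<in> {..<?d}"
      show "ad (v!j) (y!j) + (if j = i then 1 else 0) = ad (u!j) (y!j)"
        using i v1 v2 unfolding w_def ad_def by (cases "j = i") auto
    qed simp
    finally show ?thesis .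
  qed
  ultimately show ?thesis by blast
qed

lemma grid_zero:
  assumes "u \<in> grid_V ns" "y \<in> grid_V ns" "Dl (length ns) u y = 0"
  shows "u = y"
proof -
  have "length u = length ns" "length y = length ns" using assms unfolding grid_V_def by auto
  moreover have "\<forall>i<length ns. ad (u!i) (y!i) = 0" using assms(3) unfolding Dl_def by simp
  ultimately show ?thesis unfolding ad_def by (intro nth_equalityI) auto
qed

lemma grid_gdist:
  assumes "x \<in> grid_V ns" "y \<in> grid_V ns"
  shows "gdist (grid_V ns) grid_E x y = Dl (length ns) x y"
  by (rule gdist_eq[OF assms]) (use assms grid_zero grid_step grid_lip in \<open>auto simp: Dl_def ad_def\<close>)

lemma ns_le_sum: fixes ns :: "nat list" shows "j < length ns \<Longrightarrow> ns!j \<le> (\<Sum>i<length ns. ns!i)"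
  using member_le_sum[of j "{..<length ns}" "(!) ns"] by auto

lemma grid_finite: "finite (grid_V ns)"
proof (rule finite_subset)
  show "grid_V ns \<subseteq> {xs. set xs \<subseteq> {..<(\<Sum>i<length ns. ns!i)} \<and> length xs = length ns}"
  proof
    fix x assume x: "x \<in> grid_V ns"
    have "set x \<subseteq> {..<(\<Sum>i<length ns. ns!i)}"
    proof
      fix a assume "a \<in> set x"
      then obtain i where "i < length x" "x!i = a" by (auto simp: in_set_conv_nth)
      then show "a \<in> {..<(\<Sum>i<length ns. ns!i)}"
        using x ns_le_sum[of i ns] unfolding grid_V_def path_V_def by fastforce
    qed
    then show "x \<in> {xs. set xs \<subseteq> {..<(\<Sum>i<length ns. ns!i)} \<and> length xs = length ns}"
      using x unfolding grid_V_def by auto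
  qed
qed (rule finite_lists_length_eq, simp)

lemma grid_upper:
  assumes d: "0 < length ns" and ns2: "\<forall>i<length ns. 2 \<le> ns!i"
  shows "\<exists>f. resolving_broadcast (grid_V ns) grid_E f \<and>
           (\<Sum>v\<in>grid_V ns. f v) \<le> (length ns + 1) * (\<Sum>i<length ns. ns!i)"
proof -
  let ?d = "length ns" and ?V = "grid_V ns"
  define N where "N = (\<Sum>i<?d. ns!i)"
  define c0 where "c0 = (replicate ?d (0::nat))"
  define cj where "cj j = (replicate ?d (0::nat))[j := ns!j - 1]" for j
  define C where "C = insert c0 (cj ` {..<?d})"
  define f where "f v = (if v \<in> C then N else 0)" for v
  have N2: "N \<ge> 2" using ns_le_sum[of 0 ns] d ns2 unfolding N_def by force
  have c0V: "c0 \<in> ?V" using ns2 unfolding c0_def grid_V_def path_V_def by auto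
  have cjV: "cj j \<in> ?V" if "j < ?d" for j
    using ns2 that unfolding cj_def grid_V_def path_V_def by (auto simp: nth_list_update)
  have CV: "C \<subseteq> ?V" using c0V cjV unfolding C_def by auto
  have Dc0: "Dl ?d x c0 = (\<Sum>i<?d. x!i)" for x unfolding Dl_def c0_def ad_def by simp
  have Dcj: "Dl ?d x (cj j) + 2 * x!j = Dl ?d x c0 + (ns!j - 1)" if "x \<in> ?V" "j < ?d" for x j
  proof -
    have xb: "x!j < ns!j" using that unfolding grid_V_def path_V_def by auto
    have "Dl ?d x (cj j) + 2 * x!j = (\<Sum>i<?d. ad (x!i) (cj j!i) + (if i = j then 2 * x!j else 0))"
      unfolding Dl_def sum.distrib using that by simp
    also have "\<dots> = (\<Sum>i<?d. x!i + (if i = j then ns!j - 1 else 0))"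
    proof (rule sum.cong)
      fix i assume "i \<in> {..<?d}"
      then show "ad (x!i) (cj j!i) + (if i = j then 2 * x!j else 0) = x!i + (if i = j then ns!j - 1 else 0)"
        using xb unfolding cj_def ad_def by (cases "i = j") (auto simp: nth_list_update)
    qed simp
    also have "\<dots> = Dl ?d x c0 + (ns!j - 1)" unfolding sum.distrib Dc0 using that by simp
    finally show ?thesis .
  qed
  have Dle: "Dl ?d x z \<le> N" if "x \<in> ?V" "z \<in> ?V" for x z
    unfolding Dl_def N_def
  proof (rule sum_mono)
    fix i assume "i \<in> {..<?d}"
    then have "x!i < ns!i" "z!i < ns!i" using that unfolding grid_V_def path_V_def by auto
    then show "ad (x!i) (z!i) \<le> ns!i" unfolding ad_def by linarith
  qed
  have td: "tdist ?V grid_E N x z = Dl ?d x z" if "x \<in> ?V" "z \<in> ?V" for x z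
    unfolding tdist_def using grid_gdist[OF that] Dle[OF that] by simp
  have rb: "resolving_broadcast ?V grid_E f"
    unfolding resolving_broadcast_def
  proof (intro conjI allI impI ballI)
    fix v assume "v \<notin> ?V" then show "f v = 0" using CV unfolding f_def by auto
  next
    fix x y assume xV: "x \<in> ?V" and yV: "y \<in> ?V" and xy: "x \<noteq> y"
    show "\<exists>z\<in>?V. f z > 0 \<and> tdist ?V grid_E (f z) x z \<noteq> tdist ?V grid_E (f z) y z"
    proof (rule ccontr)
      assume "\<not> ?thesis"
      then have nr: "\<And>z. z \<in> ?V \<Longrightarrow> f z > 0 \<Longrightarrow> tdist ?V grid_E (f z) x z = tdist ?V grid_E (f z) y z"
        by blast
      have eq: "Dl ?d x z = Dl ?d y z" if "z \<in> C" for z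
      proof -
        have zV: "z \<in> ?V" using that CV by blast
        have fz: "f z = N" using that unfolding f_def by simp
        have "tdist ?V grid_E N x z = tdist ?V grid_E N y z" using nr[OF zV] fz N2 by simp
        then show ?thesis using td[OF xV zV] td[OF yV zV] by simp
      qed
      have "x!j = y!j" if "j < ?d" for j
        using Dcj[OF xV that] Dcj[OF yV that] eq[of c0] eq[of "cj j"] that unfolding C_def by auto
      moreover have "length x = ?d" "length y = ?d" using xV yV unfolding grid_V_def by auto
      ultimately have "x = y" by (intro nth_equalityI) auto
      then show False using xy by simp
    qed
  qed
  have "(\<Sum>v\<in>?V. f v) = (\<Sum>v\<in>?V \<inter> C. N)"
    unfolding f_def by (rule sum.inter_restrict[symmetric]) (rule grid_finite)
  also have "\<dots> = card C * N" using CV by (simp add: Int_absorb1)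
  also have "\<dots> \<le> (?d + 1) * N"
  proof -
    have "card (cj ` {..<?d}) \<le> ?d" using card_image_le[of "{..<?d}" cj] by simp
    moreover have "card C \<le> Suc (card (cj ` {..<?d}))" unfolding C_def
      by (simp add: card_insert_if)
    ultimately have "card C \<le> ?d + 1" by simp
    then show ?thesis by (rule mult_le_mono1)
  qed
  finally show ?thesis using rb unfolding N_def by blast
qed

lemma grid_lower:
  assumes rb: "resolving_broadcast (grid_V ns) grid_E f" and j: "j < length ns" and ns2: "\<forall>i<length ns. 2 \<le> ns!i"
  shows "ns!j \<le> 6 * (\<Sum>v\<in>grid_V ns. f v)"
proof -
  let ?d = "length ns" and ?V = "grid_V ns"
  define S where "S = (\<Sum>v\<in>?V. f v)"
  have n2: "2 \<le> ns!j" using ns2 j by simp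
  define a where "a y = (replicate ?d (0::nat))[j := y]" for y
  have aV: "a y \<in> ?V" if "y < ns!j" for y
    using that ns2 j unfolding a_def grid_V_def path_V_def by (auto simp: nth_list_update)
  have aj: "a y ! j = y" for y using j unfolding a_def by simp
  have Dla: "ad y (z!j) \<le> Dl ?d (a y) z" for y z
    unfolding Dl_def using member_le_sum[of j "{..<?d}" "\<lambda>i. ad (a y!i) (z!i)"] j aj by simp
  define W where "W z = {y. 0 < f z \<and> ad y (z!j) \<le> f z + 1}" for z
  have cover: "{..<ns!j - 1} \<subseteq> (\<Union>z\<in>?V. W z)"
  proof
    fix y assume "y \<in> {..<ns!j - 1}"
    then have y: "y < ns!j" "Suc y < ns!j" by auto
    have ne: "a y \<noteq> a (Suc y)" proof
      assume "a y = a (Suc y)" then have "a y ! j = a (Suc y) ! j" by simp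
      then show False using aj[of y] aj[of "Suc y"] by simp
    qed
    obtain z where z: "z \<in> ?V" "f z > 0"
      "tdist ?V grid_E (f z) (a y) z \<noteq> tdist ?V grid_E (f z) (a (Suc y)) z"
      using rb aV[OF y(1)] aV[OF y(2)] ne unfolding resolving_broadcast_def by blast
    have g1: "gdist ?V grid_E (a y) z = Dl ?d (a y) z" by (rule grid_gdist[OF aV[OF y(1)] z(1)])
    have g2: "gdist ?V grid_E (a (Suc y)) z = Dl ?d (a (Suc y)) z" by (rule grid_gdist[OF aV[OF y(2)] z(1)])
    have "Dl ?d (a y) z \<le> f z \<or> Dl ?d (a (Suc y)) z \<le> f z"
      using z(3) unfolding tdist_def g1 g2 by auto
    then have "ad y (z!j) \<le> f z + 1"
      using Dla[of y z] Dla[of "Suc y" z] unfolding ad_def by auto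
    then show "y \<in> (\<Union>z\<in>?V. W z)" using z unfolding W_def by blast
  qed
  have Wsub: "W z \<subseteq> {z!j - (f z + 1) .. z!j + (f z + 1)}" for z
    unfolding W_def ad_def by auto
  have Wfin: "finite (W z)" for z using Wsub finite_subset by blast
  have Wcard: "card (W z) \<le> 5 * f z" for z
  proof (cases "f z = 0")
    case True then have "W z = {}" unfolding W_def by auto
    then show ?thesis by simp
  next
    case False
    have "card (W z) \<le> card {z!j - (f z + 1) .. z!j + (f z + 1)}"
      by (rule card_mono[OF _ Wsub]) simp
    also have "\<dots> \<le> 2 * f z + 3" by simp
    also have "\<dots> \<le> 5 * f z" using False by simp
    finally show ?thesis .
  qed
  have "ns!j - 1 = card {..<ns!j - 1}" by simp
  also have "\<dots> \<le> card (\<Union>z\<in>?V. W z)"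
    by (rule card_mono[OF _ cover]) (use grid_finite Wfin in blast)
  also have "\<dots> \<le> (\<Sum>z\<in>?V. card (W z))" by (rule card_UN_le[OF grid_finite])
  also have "\<dots> \<le> (\<Sum>z\<in>?V. 5 * f z)" by (rule sum_mono) (rule Wcard)
  also have "\<dots> = 5 * S" unfolding S_def by (simp add: sum_distrib_left)
  finally have "ns!j - 1 \<le> 5 * S" .
  then show ?thesis using n2 unfolding S_def[symmetric] by linarith
qed

lemma grid_bdim:
  assumes d: "0 < length ns" and ns2: "\<forall>i<length ns. 2 \<le> ns!i"
  shows "(\<Sum>i<length ns. ns!i) \<le> 6 * length ns * bdim (grid_V ns) grid_E \<and>
         bdim (grid_V ns) grid_E \<le> (length ns + 1) * (\<Sum>i<length ns. ns!i)"
proof -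
  obtain f0 where f0: "resolving_broadcast (grid_V ns) grid_E f0"
    "(\<Sum>v\<in>grid_V ns. f0 v) \<le> (length ns + 1) * (\<Sum>i<length ns. ns!i)"
    using grid_upper[OF d ns2] by blast
  have ex: "\<exists>s f. resolving_broadcast (grid_V ns) grid_E f \<and> (\<Sum>v\<in>grid_V ns. f v) = s"
    using f0 by blast
  have "bdim (grid_V ns) grid_E \<le> (\<Sum>v\<in>grid_V ns. f0 v)"
    unfolding bdim_def by (rule Least_le) (use f0 in blast)
  with f0 have up: "bdim (grid_V ns) grid_E \<le> (length ns + 1) * (\<Sum>i<length ns. ns!i)" by simp
  obtain f where f: "resolving_broadcast (grid_V ns) grid_E f" "(\<Sum>v\<in>grid_V ns. f v) = bdim (grid_V ns) grid_E"
    using LeastI_ex[OF ex] unfolding bdim_def by blast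
  have "(\<Sum>i<length ns. ns!i) \<le> (\<Sum>i<length ns. 6 * bdim (grid_V ns) grid_E)"
    by (rule sum_mono) (use grid_lower[OF f(1) _ ns2] f(2) in auto)
  also have "\<dots> = 6 * length ns * bdim (grid_V ns) grid_E" by simp
  finally show ?thesis using up by simp
qed

lemma walk_iso:
  assumes bij: "bij_betw \<phi> V1 V2" and e: "\<forall>u\<in>V1. \<forall>v\<in>V1. E1 u v \<longleftrightarrow> E2 (\<phi> u) (\<phi> v)"
    and x: "x \<in> V1" and y: "y \<in> V1"
  shows "walk_of_len V2 E2 (\<phi> x) (\<phi> y) k \<longleftrightarrow> walk_of_len V1 E1 x y k"
proof
  assume "walk_of_len V1 E1 x y k"
  then obtain p where p: "p 0 = x" "p k = y" "\<forall>i\<le>k. p i \<in> V1" "\<forall>i<k. E1 (p i) (p (Suc i))"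
    unfolding walk_of_len_def by blast
  show "walk_of_len V2 E2 (\<phi> x) (\<phi> y) k" unfolding walk_of_len_def
    by (intro exI[of _ "\<phi> \<circ> p"]) (use p e bij bij_betwE in fastforce)
next
  let ?\<psi> = "inv_into V1 \<phi>"
  assume "walk_of_len V2 E2 (\<phi> x) (\<phi> y) k"
  then obtain q where q: "q 0 = \<phi> x" "q k = \<phi> y" "\<forall>i\<le>k. q i \<in> V2" "\<forall>i<k. E2 (q i) (q (Suc i))"
    unfolding walk_of_len_def by blast
  have inv1: "?\<psi> (\<phi> a) = a" if "a \<in> V1" for a using bij that bij_betw_inv_into_left by metis
  have inv2: "\<phi> (?\<psi> b) = b" "?\<psi> b \<in> V1" if "b \<in> V2" for b
    using bij that bij_betw_inv_into_right bij_betw_inv_into bij_betwE by metis+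
  show "walk_of_len V1 E1 x y k" unfolding walk_of_len_def
  proof (intro exI[of _ "?\<psi> \<circ> q"] conjI allI impI)
    show "(?\<psi> \<circ> q) 0 = x" using q inv1 x by simp
    show "(?\<psi> \<circ> q) k = y" using q inv1 y by simp
    fix i
    show "i \<le> k \<Longrightarrow> (?\<psi> \<circ> q) i \<in> V1" using q inv2 by simp
    assume i: "i < k"
    then have "q i \<in> V2" "q (Suc i) \<in> V2" using q by auto
    then show "E1 ((?\<psi> \<circ> q) i) ((?\<psi> \<circ> q) (Suc i))" using e inv2 q i by simp
  qed
qed

lemma rb_iso:
  assumes bij: "bij_betw \<phi> V1 V2" and e: "\<forall>u\<in>V1. \<forall>v\<in>V1. E1 u v \<longleftrightarrow> E2 (\<phi> u) (\<phi> v)"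
    and rb: "resolving_broadcast V1 E1 f" and fin: "finite V1"
  shows "\<exists>g. resolving_broadcast V2 E2 g \<and> (\<Sum>v\<in>V2. g v) = (\<Sum>v\<in>V1. f v)"
proof -
  let ?\<psi> = "inv_into V1 \<phi>"
  define g where "g v = (if v \<in> V2 then f (?\<psi> v) else 0)" for v
  have inv1: "?\<psi> (\<phi> a) = a" if "a \<in> V1" for a using bij that bij_betw_inv_into_left by metis
  have inv2: "\<phi> (?\<psi> b) = b" "?\<psi> b \<in> V1" if "b \<in> V2" for b
    using bij that bij_betw_inv_into_right bij_betw_inv_into bij_betwE by metis+
  have phiV: "\<phi> a \<in> V2" if "a \<in> V1" for a using bij that bij_betwE by metis
  have gd: "gdist V2 E2 (\<phi> a) (\<phi> b) = gdist V1 E1 a b" if "a \<in> V1" "b \<in> V1" for a b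
  proof -
    have "walk_of_len V2 E2 (\<phi> a) (\<phi> b) = walk_of_len V1 E1 a b"
      using walk_iso[OF bij e that] by (intro ext) simp
    then show ?thesis unfolding gdist_def by simp
  qed
  have td: "tdist V2 E2 k (\<phi> a) (\<phi> b) = tdist V1 E1 k a b" if "a \<in> V1" "b \<in> V1" for a b k
    unfolding tdist_def using gd[OF that] by simp
  have "resolving_broadcast V2 E2 g" unfolding resolving_broadcast_def
  proof (intro conjI allI impI ballI)
    fix v assume "v \<notin> V2" then show "g v = 0" unfolding g_def by simp
  next
    fix x y assume xV: "x \<in> V2" and yV: "y \<in> V2" and xy: "x \<noteq> y"
    have "?\<psi> x \<noteq> ?\<psi> y" using xy inv2[OF xV] inv2[OF yV] by metis
    then obtain z where z: "z \<in> V1" "f z > 0" "tdist V1 E1 (f z) (?\<psi> x) z \<noteq> tdist V1 E1 (f z) (?\<psi> y) z"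
      using rb inv2[OF xV] inv2[OF yV] unfolding resolving_broadcast_def by blast
    have gz: "g (\<phi> z) = f z" using z(1) phiV inv1 unfolding g_def by simp
    show "\<exists>z\<in>V2. g z > 0 \<and> tdist V2 E2 (g z) x z \<noteq> tdist V2 E2 (g z) y z"
    proof (intro bexI[of _ "\<phi> z"] conjI)
      show "\<phi> z \<in> V2" using phiV z by simp
      show "g (\<phi> z) > 0" using gz z by simp
      show "tdist V2 E2 (g (\<phi> z)) x (\<phi> z) \<noteq> tdist V2 E2 (g (\<phi> z)) y (\<phi> z)"
        using td[OF inv2(2)[OF xV] z(1)] td[OF inv2(2)[OF yV] z(1)] inv2(1)[OF xV] inv2(1)[OF yV] z(3) gz
        by simp
    qed
  qed
  moreover have "(\<Sum>v\<in>V2. g v) = (\<Sum>v\<in>V1. f v)"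
  proof -
    have "(\<Sum>v\<in>V2. g v) = (\<Sum>v\<in>V2. f (?\<psi> v))" unfolding g_def by simp
    also have "\<dots> = (\<Sum>v\<in>V1. f v)"
      by (rule sum.reindex_bij_betw) (rule bij_betw_inv_into[OF bij])
    finally show ?thesis .
  qed
  ultimately show ?thesis by blast
qed

lemma bdim_iso_le:
  assumes bij: "bij_betw \<phi> V1 V2" and e: "\<forall>u\<in>V1. \<forall>v\<in>V1. E1 u v \<longleftrightarrow> E2 (\<phi> u) (\<phi> v)"
    and fin: "finite V1" and ex: "\<exists>f. resolving_broadcast V1 E1 f"
  shows "bdim V2 E2 \<le> bdim V1 E1"
proof -
  have ex': "\<exists>s f. resolving_broadcast V1 E1 f \<and> (\<Sum>v\<in>V1. f v) = s" using ex by blast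
  obtain f where f: "resolving_broadcast V1 E1 f" "(\<Sum>v\<in>V1. f v) = bdim V1 E1"
    using LeastI_ex[OF ex'] unfolding bdim_def by blast
  obtain g where g: "resolving_broadcast V2 E2 g" "(\<Sum>v\<in>V2. g v) = bdim V1 E1"
    using rb_iso[OF bij e f(1) fin] f(2) by auto
  have "bdim V2 E2 \<le> (\<Sum>v\<in>V2. g v)" unfolding bdim_def by (rule Least_le) (use g(1) in blast)
  then show ?thesis using g(2) by simp
qed

lemma grid2_edge: "grid_E [a, b] [a', b'] \<longleftrightarrow> cart_E path_E path_E (a, b) (a', b')"
  unfolding grid_E_def cart_E_def by (auto simp: Ex_less_Suc2 All_less_Suc2 path_E_def)

lemma bdim_2d:
  assumes "2 \<le> m" "2 \<le> n"
  shows "bdim (cart_V (path_V m) (path_V n)) (cart_E path_E path_E) = bdim (grid_V [m, n]) grid_E"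
proof -
  let ?V1 = "cart_V (path_V m) (path_V n)" and ?V2 = "grid_V [m, n]"
  define \<phi> where "\<phi> = (\<lambda>(a::nat, b::nat). [a, b])"
  define \<psi> where "\<psi> = (\<lambda>x::nat list. (x!0, x!1))"
  have l2: "x \<in> ?V2 \<Longrightarrow> \<exists>a b. x = [a, b] \<and> a < m \<and> b < n" for x
    unfolding grid_V_def path_V_def by (auto simp: length_Suc_conv All_less_Suc2)
  have V2: "?V2 = \<phi> ` ?V1"
  proof
    show "?V2 \<subseteq> \<phi> ` ?V1"
    proof
      fix x assume "x \<in> ?V2"
      then obtain a b where "x = [a, b]" "a < m" "b < n" using l2 by blast
      then show "x \<in> \<phi> ` ?V1" unfolding \<phi>_def cart_V_def path_V_def by force
    qed
  qed (auto simp: \<phi>_def cart_V_def path_V_def grid_V_def All_less_Suc2)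
  have b1: "bij_betw \<phi> ?V1 ?V2" unfolding bij_betw_def V2 by (auto simp: inj_on_def \<phi>_def)
  have e1: "\<forall>u\<in>?V1. \<forall>v\<in>?V1. cart_E path_E path_E u v \<longleftrightarrow> grid_E (\<phi> u) (\<phi> v)"
    unfolding \<phi>_def using grid2_edge by auto
  have V1: "?V1 = \<psi> ` ?V2"
  proof
    show "?V1 \<subseteq> \<psi> ` ?V2"
    proof
      fix u assume u: "u \<in> ?V1"
      then have "\<phi> u \<in> ?V2" using V2 by blast
      moreover have "\<psi> (\<phi> u) = u" unfolding \<phi>_def \<psi>_def by (cases u) simp
      ultimately show "u \<in> \<psi> ` ?V2" by force
    qed
  next
    show "\<psi> ` ?V2 \<subseteq> ?V1"
    proof
      fix u assume "u \<in> \<psi> ` ?V2"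
      then obtain x where "x \<in> ?V2" "u = \<psi> x" by blast
      then obtain a b where "x = [a, b]" "a < m" "b < n" "u = \<psi> x" using l2 by blast
      then show "u \<in> ?V1" unfolding \<psi>_def cart_V_def path_V_def by simp
    qed
  qed
  have b2: "bij_betw \<psi> ?V2 ?V1" unfolding bij_betw_def V1[symmetric]
  proof (intro conjI inj_onI refl)
    fix x y assume "x \<in> ?V2" "y \<in> ?V2" "\<psi> x = \<psi> y"
    then obtain a b a' b' where "x = [a, b]" "y = [a', b']" "\<psi> x = \<psi> y" using l2 by metis
    then show "x = y" unfolding \<psi>_def by simp
  qed
  have e2: "\<forall>u\<in>?V2. \<forall>v\<in>?V2. grid_E u v \<longleftrightarrow> cart_E path_E path_E (\<psi> u) (\<psi> v)"
  proof (intro ballI)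
    fix u v assume "u \<in> ?V2" "v \<in> ?V2"
    then obtain a b a' b' where "u = [a, b]" "v = [a', b']" using l2 by metis
    then show "grid_E u v \<longleftrightarrow> cart_E path_E path_E (\<psi> u) (\<psi> v)" using grid2_edge unfolding \<psi>_def by simp
  qed
  have fin2: "finite ?V2" by (rule grid_finite)
  have fin1: "finite ?V1" unfolding cart_V_def path_V_def by simp
  have ns2: "\<forall>i<length [m, n]. 2 \<le> [m, n]!i" using assms by (auto simp: All_less_Suc2)
  obtain f0 where f0: "resolving_broadcast ?V2 grid_E f0" using grid_upper[OF _ ns2] by auto
  obtain g0 where g0: "resolving_broadcast ?V1 (cart_E path_E path_E) g0"
    using rb_iso[OF b2 e2 f0 fin2] by blast
  show ?thesis
    using bdim_iso_le[OF b1 e1 fin1] bdim_iso_le[OF b2 e2 fin2] f0 g0 by fastforce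
qed

theorem corollary5p3:
  shows "(\<exists>c1 c2 :: real. c1 > 0 \<and> c2 > 0 \<and>
           (\<forall>m n :: nat. m \<ge> 2 \<longrightarrow> n \<ge> 2 \<longrightarrow>
              c1 * real (m + n) \<le> real (bdim (cart_V (path_V m) (path_V n)) (cart_E path_E path_E)) \<and>
              real (bdim (cart_V (path_V m) (path_V n)) (cart_E path_E path_E)) \<le> c2 * real (m + n)))
       \<and> (\<forall>d :: nat. d \<ge> 2 \<longrightarrow>
           (\<exists>c1 c2 :: real. c1 > 0 \<and> c2 > 0 \<and>
              (\<forall>ns :: nat list. length ns = d \<longrightarrow> (\<forall>i<d. ns ! i \<ge> 2) \<longrightarrow>
                 c1 * real (\<Sum>i<d. ns ! i) \<le> real (bdim (grid_V ns) grid_E) \<and>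
                 real (bdim (grid_V ns) grid_E) \<le> c2 * real (\<Sum>i<d. ns ! i))))"
proof
  show "\<exists>c1 c2 :: real. c1 > 0 \<and> c2 > 0 \<and>
           (\<forall>m n :: nat. m \<ge> 2 \<longrightarrow> n \<ge> 2 \<longrightarrow>
              c1 * real (m + n) \<le> real (bdim (cart_V (path_V m) (path_V n)) (cart_E path_E path_E)) \<and>
              real (bdim (cart_V (path_V m) (path_V n)) (cart_E path_E path_E)) \<le> c2 * real (m + n))"
  proof (rule exI[of _ "1/12::real"], rule exI[of _ "3::real"], intro conjI allI impI)
    fix m n :: nat assume mn: "2 \<le> m" "2 \<le> n"
    have ns2: "\<forall>i<length [m, n]. 2 \<le> [m, n]!i" using mn by (auto simp: All_less_Suc2)
    have s: "(\<Sum>i<length [m, n]. [m, n]!i) = m + n" by (simp add: numeral_2_eq_2)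
    have B: "m + n \<le> 12 * bdim (grid_V [m, n]) grid_E" "bdim (grid_V [m, n]) grid_E \<le> 3 * (m + n)"
      using grid_bdim[OF _ ns2] unfolding s by auto
    have B': "real (m + n) \<le> 12 * real (bdim (grid_V [m, n]) grid_E)"
      "real (bdim (grid_V [m, n]) grid_E) \<le> 3 * real (m + n)"
      using B by (metis of_nat_le_iff of_nat_mult of_nat_numeral)+
    show "1/12 * real (m + n) \<le> real (bdim (cart_V (path_V m) (path_V n)) (cart_E path_E path_E))"
      using B'(1) bdim_2d[OF mn] by simp
    show "real (bdim (cart_V (path_V m) (path_V n)) (cart_E path_E path_E)) \<le> 3 * real (m + n)"
      using B'(2) bdim_2d[OF mn] by simp
  qed simp_all
next
  show "\<forall>d :: nat. d \<ge> 2 \<longrightarrow>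
           (\<exists>c1 c2 :: real. c1 > 0 \<and> c2 > 0 \<and>
              (\<forall>ns :: nat list. length ns = d \<longrightarrow> (\<forall>i<d. ns ! i \<ge> 2) \<longrightarrow>
                 c1 * real (\<Sum>i<d. ns ! i) \<le> real (bdim (grid_V ns) grid_E) \<and>
                 real (bdim (grid_V ns) grid_E) \<le> c2 * real (\<Sum>i<d. ns ! i)))"
  proof (intro allI impI)
    fix d :: nat assume d: "2 \<le> d"
    show "\<exists>c1 c2 :: real. c1 > 0 \<and> c2 > 0 \<and>
              (\<forall>ns :: nat list. length ns = d \<longrightarrow> (\<forall>i<d. ns ! i \<ge> 2) \<longrightarrow>
                 c1 * real (\<Sum>i<d. ns ! i) \<le> real (bdim (grid_V ns) grid_E) \<and>
                 real (bdim (grid_V ns) grid_E) \<le> c2 * real (\<Sum>i<d. ns ! i))"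
    proof (rule exI[of _ "1 / (6 * real d)"], rule exI[of _ "real d + 1"], intro conjI allI impI)
      fix ns :: "nat list" assume l: "length ns = d" and ns2: "\<forall>i<d. 2 \<le> ns!i"
      have B: "(\<Sum>i<d. ns!i) \<le> 6 * d * bdim (grid_V ns) grid_E"
              "bdim (grid_V ns) grid_E \<le> (d + 1) * (\<Sum>i<d. ns!i)"
        using grid_bdim[of ns] l ns2 d by auto
      have B1: "real (\<Sum>i<d. ns!i) \<le> (6 * real d) * real (bdim (grid_V ns) grid_E)"
        using B(1) by (metis of_nat_le_iff of_nat_mult of_nat_numeral)
      have B2: "real (bdim (grid_V ns) grid_E) \<le> (real d + 1) * real (\<Sum>i<d. ns!i)"
        using B(2) by (metis of_nat_le_iff of_nat_mult of_nat_Suc Suc_eq_plus1 add.commute)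
      have dp: "0 < 6 * real d" using d by simp
      show "1 / (6 * real d) * real (\<Sum>i<d. ns!i) \<le> real (bdim (grid_V ns) grid_E)"
        using B1 dp by (simp add: field_simps)
      show "real (bdim (grid_V ns) grid_E) \<le> (real d + 1) * real (\<Sum>i<d. ns!i)" by (rule B2)
    qed (use d in simp_all)
  qed
qed

end
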